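(* Let $\mathbb{B}$ be the structure defined in the context, let $t:B^k\to B$ be a polymorphism of $\mathbb{B}$, and let $i\in\{0,\dots,n\}$. Let $l_{a_1},l_{a_2},l_i,l_{i+1},\dots,l_n\in\mathbb{N}_0$ with $l_{a_1}+l_{a_2}+l_i+l_{i+1}+\dots+l_n=k$ and $p:=l_{a_1}+l_{a_2}\le l_i$. Suppose $$t(\underbrace{a_1,\dots,a_1}_{l_{a_1}},\underbrace{a_2,\dots,a_2}_{l_{a_2}},\underbrace{i,\dots,i}_{l_i},\underbrace{i+1,\dots,i+1}_{l_{i+1}},\dots,\underbrace{n,\dots,n}_{l_n})=i.$$ Then for all $x_1,\dots,x_{l_i-p}\in\{0,1,\dots,i-1\}$, $$t(\underbrace{a_1,\dots,a_1}_{p},\underbrace{a_2,\dots,a_2}_{p},x_1,\dots,x_{l_i-p},\underbrace{i+1,\dots,i+1}_{l_{i+1}},\dots,\underbrace{n,\dots,n}_{l_n})\neq a_1$$ and $$t(\underbrace{a_2,\dots,a_2}_{p},\underbrace{a_1,\dots,a_1}_{p},x_1,\dots,x_{l_i-p},\underbrace{i+1,\dots,i+1}_{l_{i+1}},\dots,\underbrace{n,\dots,n}_{l_n})\neq a_2.$$ The same holds if one fixed permutation of the $k$ coordinate positions is applied to the hypothesis tuple and to the conclusion tuples.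
   Context: Fix an integer $n\ge0$. Let $B=\{a_1,a_2,0,1,\dots,n\}$ and, for $r\in\{0,\dots,n+1\}$, let $B_r=\{a_1,a_2,0,1,\dots,r-1\}$ (so $B_0=\{a_1,a_2\}$, $B_{n+1}=B$), with the linear order $a_1<a_2<0<1<\dots<n$. For $i\in\{0,\dots,n\}$ and $j\in\{1,2\}$ let $$R_i^{(j)}=\Big(B_i\times\{a_1,a_2,i\}\setminus\{(a_j,i)\}\Big)\cup\{(r,r): i<r\le n\}\subseteq B^2.$$ Let $\mathbb{B}$ be the relational structure with universe $B$ whose relations are all $R_i^{(j)}$ ($i\in\{0,\dots,n\}$, $j\in\{1,2\}$) together with every nonempty subset $X\subseteq B$ as a unary relation. A polymorphism of $\mathbb{B}$ is an operation $t:B^k\to B$ compatible with all these relations, where compatibility with a relation $R$ means that applying $t$ coordinatewise to any $k$ tuples of $R$ yields a tuple of $R$. *)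

theory Defs
  imports "HOL-Combinatorics.Permutations"
begin

datatype elt = A1 | A2 | N nat

definition Bset :: "nat \<Rightarrow> elt set" where
  "Bset n = {A1, A2} \<union> N ` {0..n}"

definition Bpre :: "nat \<Rightarrow> elt set" where
  "Bpre r = {A1, A2} \<union> N ` {0..<r}"

definition Rel :: "nat \<Rightarrow> nat \<Rightarrow> nat \<Rightarrow> (elt \<times> elt) set" where
  "Rel n i j = (Bpre i \<times> {A1, A2, N i} - {(if j = 1 then A1 else A2, N i)})
               \<union> {(N r, N r) | r. i < r \<and> r \<le> n}"

definition binrels :: "nat \<Rightarrow> (elt \<times> elt) set set" where
  "binrels n = {Rel n i j | i j. i \<le> n \<and> j \<in> {1, 2}}"

text \<open>k-ary operations on B are modelled as functions on lists; only their values
  on lists of length k with entries in B matter.\<close>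
definition preserves_unary :: "nat \<Rightarrow> (elt list \<Rightarrow> elt) \<Rightarrow> elt set \<Rightarrow> bool" where
  "preserves_unary k t X \<longleftrightarrow>
     (\<forall>xs. length xs = k \<and> set xs \<subseteq> X \<longrightarrow> t xs \<in> X)"

definition preserves_binary :: "nat \<Rightarrow> (elt list \<Rightarrow> elt) \<Rightarrow> (elt \<times> elt) set \<Rightarrow> bool" where
  "preserves_binary k t R \<longleftrightarrow>
     (\<forall>xs ys. length xs = k \<and> length ys = k \<and> (\<forall>m<k. (xs ! m, ys ! m) \<in> R)
         \<longrightarrow> (t xs, t ys) \<in> R)"

definition polymorphism :: "nat \<Rightarrow> nat \<Rightarrow> (elt list \<Rightarrow> elt) \<Rightarrow> bool" where
  "polymorphism n k t \<longleftrightarrow>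
     preserves_unary k t (Bset n) \<and>
     (\<forall>R \<in> binrels n. preserves_binary k t R) \<and>
     (\<forall>X. X \<noteq> {} \<and> X \<subseteq> Bset n \<longrightarrow> preserves_unary k t X)"

definition blocks :: "(nat \<Rightarrow> nat) \<Rightarrow> nat \<Rightarrow> nat \<Rightarrow> elt list" where
  "blocks l lo n = concat (map (\<lambda>r. replicate (l r) (N r)) [lo..<Suc n])"

end

theory Submission
  imports Defs
begin

lemma perm_pres:
  assumes "preserves_binary k t R" "\<sigma> permutes {..<k}" "length c = k" "length h = k"
    "set (zip c h) \<subseteq> R"
  shows "(t (permute_list \<sigma> c), t (permute_list \<sigma> h)) \<in> R"
proof -
  have "\<forall>m<k. (permute_list \<sigma> c ! m, permute_list \<sigma> h ! m) \<in> R"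
  proof (intro allI impI)
    fix m assume m: "m < k"
    have sm: "\<sigma> m < k" using permutes_in_image[OF assms(2)] m by auto
    have "(c ! \<sigma> m, h ! \<sigma> m) \<in> set (zip c h)"
      using sm assms(3,4) by (auto simp: set_zip)
    then show "(permute_list \<sigma> c ! m, permute_list \<sigma> h ! m) \<in> R"
      using assms m by (metis permute_list_nth subsetD)
  qed
  then show ?thesis using assms(1,3,4) unfolding preserves_binary_def by auto
qed

lemma blocks_split: "i \<le> n \<Longrightarrow> blocks l i n = replicate (l i) (N i) @ blocks l (Suc i) n"
  unfolding blocks_def by (simp add: upt_rec)

lemma blocks_set: "set (blocks l lo n) \<subseteq> N ` {lo..n}"
  unfolding blocks_def by (auto split: if_splits)

lemma blocks_len: "length (blocks l lo n) = (\<Sum>r = lo..n. l r)"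
  unfolding blocks_def
  by (simp add: length_concat comp_def sum_set_upt_conv_sum_list_nat[symmetric] atLeastLessThanSuc_atLeastAtMost del: upt_Suc)

theorem mainTheorem8:
  fixes n k i la1 la2 :: nat and l :: "nat \<Rightarrow> nat" and t :: "elt list \<Rightarrow> elt"
    and \<sigma> :: "nat \<Rightarrow> nat"
  assumes poly: "polymorphism n k t"
    and i_le: "i \<le> n"
    and sum_k: "la1 + la2 + (\<Sum>r = i..n. l r) = k"
    and p_le: "la1 + la2 \<le> l i"
    and perm: "\<sigma> permutes {..<k}"
    and hyp: "t (permute_list \<sigma>
                 (replicate la1 A1 @ replicate la2 A2 @ blocks l i n)) = N i"
  shows "\<forall>xs. length xs = l i - (la1 + la2) \<and> set xs \<subseteq> N ` {0..<i} \<longrightarrow>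
           t (permute_list \<sigma> (replicate (la1 + la2) A1 @ replicate (la1 + la2) A2 @ xs
                                @ blocks l (Suc i) n)) \<noteq> A1 \<and>
           t (permute_list \<sigma> (replicate (la1 + la2) A2 @ replicate (la1 + la2) A1 @ xs
                                @ blocks l (Suc i) n)) \<noteq> A2"
proof (intro allI impI)
  fix xs assume xs: "length xs = l i - (la1 + la2) \<and> set xs \<subseteq> N ` {0..<i}"
  define p where "p = la1 + la2"
  define D where "D = blocks l (Suc i) n"
  define H where "H = replicate la1 A1 @ replicate la2 A2 @ blocks l i n"
  have H: "H = (replicate la1 A1 @ replicate la2 A2) @ replicate p (N i) @ (replicate (l i - p) (N i) @ D)"
    unfolding H_def D_def using blocks_split[OF i_le, of l] p_le
    by (simp add: p_def replicate_add[symmetric])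
  have sumsplit: "(\<Sum>r = i..n. l r) = l i + (\<Sum>r = Suc i..n. l r)"
    using i_le by (simp add: sum.atLeast_Suc_atMost)
  have lenD: "length D = (\<Sum>r = Suc i..n. l r)" unfolding D_def by (rule blocks_len)
  have lenH: "length H = k" unfolding H_def using sum_k by (simp add: blocks_len)
  have setD: "set D \<subseteq> N ` {Suc i..n}" unfolding D_def by (rule blocks_set)
  have diag: "set (zip D D) \<subseteq> {(N r, N r) | r. i < r \<and> r \<le> n}"
    using setD by (auto simp: zip_same)
  have z1: "set (zip (replicate p a) (replicate la1 A1 @ replicate la2 A2)) \<subseteq> {a} \<times> {A1, A2}" for a
    by (auto dest: set_zip_leftD set_zip_rightD)
  have z2: "set (zip (replicate p a) (replicate p (N i))) \<subseteq> {(a, N i)}" for a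
    by (auto dest: set_zip_leftD set_zip_rightD)
  have z3: "set (zip xs (replicate (l i - p) (N i))) \<subseteq> N ` {0..<i} \<times> {N i}"
  proof
    fix z assume z: "z \<in> set (zip xs (replicate (l i - p) (N i)))"
    obtain a b where ab: "z = (a, b)" by (cases z)
    have "a \<in> set xs" "b \<in> set (replicate (l i - p) (N i))"
      using z ab by (auto dest: set_zip_leftD set_zip_rightD)
    then show "z \<in> N ` {0..<i} \<times> {N i}" using xs ab by (auto split: if_splits)
  qed
  have zipC: "zip (replicate p a @ replicate p b @ xs @ D) H =
     zip (replicate p a) (replicate la1 A1 @ replicate la2 A2) @ zip (replicate p b) (replicate p (N i))
     @ zip xs (replicate (l i - p) (N i)) @ zip D D" for a b
  proof -
    have l1: "length (replicate p a) = length (replicate la1 A1 @ replicate la2 A2)" by (simp add: p_def)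
    have l2: "length (replicate p b) = length (replicate p (N i))" by simp
    have l3: "length xs = length (replicate (l i - p) (N i))" using xs by (simp add: p_def)
    show ?thesis unfolding H by (simp only: zip_append[OF l1] zip_append[OF l2] zip_append[OF l3])
  qed
  have lenC: "length (replicate p a @ replicate p b @ xs @ D) = k" for a b
    using xs lenD sum_k sumsplit p_le by (simp add: p_def)
  have R1: "Rel n i 1 \<in> binrels n" "Rel n i 2 \<in> binrels n"
    using i_le unfolding binrels_def by auto
  have pb: "preserves_binary k t (Rel n i 1)" "preserves_binary k t (Rel n i 2)"
    using poly R1 unfolding polymorphism_def by auto
  have s1: "set (zip (replicate p A1 @ replicate p A2 @ xs @ D) H) \<subseteq> Rel n i 1"
    unfolding zipC using z1[of A1] z2[of A2] z3 diag
    by (auto simp: Rel_def Bpre_def)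
  have s2: "set (zip (replicate p A2 @ replicate p A1 @ xs @ D) H) \<subseteq> Rel n i 2"
    unfolding zipC using z1[of A2] z2[of A1] z3 diag
    by (auto simp: Rel_def Bpre_def)
  have e1: "(t (permute_list \<sigma> (replicate p A1 @ replicate p A2 @ xs @ D)), N i) \<in> Rel n i 1"
    using perm_pres[OF pb(1) perm lenC lenH s1] hyp by (simp add: H_def)
  have e2: "(t (permute_list \<sigma> (replicate p A2 @ replicate p A1 @ xs @ D)), N i) \<in> Rel n i 2"
    using perm_pres[OF pb(2) perm lenC lenH s2] hyp by (simp add: H_def)
  show "t (permute_list \<sigma> (replicate (la1 + la2) A1 @ replicate (la1 + la2) A2 @ xs
                                @ blocks l (Suc i) n)) \<noteq> A1 \<and>
           t (permute_list \<sigma> (replicate (la1 + la2) A2 @ replicate (la1 + la2) A1 @ xs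
                                @ blocks l (Suc i) n)) \<noteq> A2"
    using e1 e2 unfolding p_def D_def by (auto simp: Rel_def)
qed

end
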